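(* Let $\mathscr H=(V,E)$ be a connected hypergraph, and let $\{a_1,\dots,a_m\}$ and $\{x_1,\dots,x_m\}$ be disjoint sets of hyperedges. Let $\mathbf f$ be a hypertree such that $x_j$ can transfer valence to $a_j$ for all $j$, but $x_j$ cannot transfer valence to $a_i$ for any $i<j$. Then for every subset $J\subset\{1,\dots,m\}$, the vector $\mathbf f+\sum_{j\in J}(\mathbf i_{\{a_j\}}-\mathbf i_{\{x_j\}})$ is a hypertree.
   Context: A hypergraph $(V,E)$ has vertex set $V$ and a finite multiset $E$ of non-empty subsets of $V$ (hyperedges); its bipartite graph has color classes $V$ and $E$ with $v$ joined to $e$ iff $v\in e$, and the hypergraph is connected if this graph is. A hypertree is a function $\mathbf f\colon E\to\mathbf N$ such that some spanning tree of this bipartite graph has degree $\mathbf f(e)+1$ at each $e\in E$. $\mathbf i_{\{e\}}$ is the indicator vector of $e$. Hyperedge $x$ can transfer valence to $y$ at $\mathbf f$ if $\mathbf f-\mathbf i_{\{x\}}+\mathbf i_{\{y\}}$ is a hypertree. *)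

theory Defs
  imports Main
begin

(* Indexing hyperedges by E models the fact
   that E is a multiset: distinct indices may carry the same vertex set. *)
definition hypergraph :: "'v set \<Rightarrow> 'e set \<Rightarrow> ('e \<Rightarrow> 'v set) \<Rightarrow> bool" where
  "hypergraph V E inc \<longleftrightarrow> finite V \<and> finite E \<and>
     (\<forall>e\<in>E. inc e \<noteq> {} \<and> inc e \<subseteq> V)"

definition bip_edges :: "'v set \<Rightarrow> 'e set \<Rightarrow> ('e \<Rightarrow> 'v set) \<Rightarrow> ('v \<times> 'e) set" where
  "bip_edges V E inc = {(v, e). v \<in> V \<and> e \<in> E \<and> v \<in> inc e}"

definition bip_nodes :: "'v set \<Rightarrow> 'e set \<Rightarrow> ('v + 'e) set" where
  "bip_nodes V E = Inl ` V \<union> Inr ` E"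

definition bip_adj :: "('v \<times> 'e) set \<Rightarrow> (('v + 'e) \<times> ('v + 'e)) set" where
  "bip_adj T = {(Inl v, Inr e) | v e. (v, e) \<in> T} \<union> {(Inr e, Inl v) | v e. (v, e) \<in> T}"

definition graph_connected :: "('v + 'e) set \<Rightarrow> ('v \<times> 'e) set \<Rightarrow> bool" where
  "graph_connected N T \<longleftrightarrow> (\<forall>u\<in>N. \<forall>w\<in>N. (u, w) \<in> (bip_adj T)\<^sup>*)"

definition hyp_connected :: "'v set \<Rightarrow> 'e set \<Rightarrow> ('e \<Rightarrow> 'v set) \<Rightarrow> bool" where
  "hyp_connected V E inc \<longleftrightarrow> graph_connected (bip_nodes V E) (bip_edges V E inc)"

definition spanning_tree :: "'v set \<Rightarrow> 'e set \<Rightarrow> ('e \<Rightarrow> 'v set) \<Rightarrow> ('v \<times> 'e) set \<Rightarrow> bool" where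
  "spanning_tree V E inc T \<longleftrightarrow> T \<subseteq> bip_edges V E inc \<and>
     graph_connected (bip_nodes V E) T \<and>
     (\<forall>t\<in>T. \<not> graph_connected (bip_nodes V E) (T - {t}))"

(* f is a hypertree: some spanning tree has degree f(e)+1 at each e \<in> E.
   (f is integer valued; the condition forces f e \<ge> 0 on E.) *)
definition hypertree :: "'v set \<Rightarrow> 'e set \<Rightarrow> ('e \<Rightarrow> 'v set) \<Rightarrow> ('e \<Rightarrow> int) \<Rightarrow> bool" where
  "hypertree V E inc f \<longleftrightarrow> (\<exists>T. spanning_tree V E inc T \<and>
     (\<forall>e\<in>E. int (card {v. (v, e) \<in> T}) = f e + 1))"

definition ind :: "'e \<Rightarrow> 'e \<Rightarrow> int" where
  "ind e = (\<lambda>y. if y = e then 1 else 0)"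

definition can_transfer :: "'v set \<Rightarrow> 'e set \<Rightarrow> ('e \<Rightarrow> 'v set) \<Rightarrow> ('e \<Rightarrow> int) \<Rightarrow> 'e \<Rightarrow> 'e \<Rightarrow> bool" where
  "can_transfer V E inc f x y \<longleftrightarrow> hypertree V E inc (\<lambda>e. f e - ind x e + ind y e)"

end

theory Submission
  imports Defs
begin


abbreviation conn :: "('v \<times> 'e) set \<Rightarrow> ('v + 'e) \<Rightarrow> ('v + 'e) \<Rightarrow> bool" where
  "conn T u w \<equiv> (u, w) \<in> (bip_adj T)\<^sup>*"

lemma bip_adj_mono: "T \<subseteq> T' \<Longrightarrow> bip_adj T \<subseteq> bip_adj T'"
  unfolding bip_adj_def by blast

lemma conn_mono: "T \<subseteq> T' \<Longrightarrow> conn T u w \<Longrightarrow> conn T' u w"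
  using rtrancl_mono[OF bip_adj_mono] by blast

lemma sym_bip_adj: "sym (bip_adj T)"
  unfolding bip_adj_def sym_def by blast

lemma conn_sym: "conn T u w \<Longrightarrow> conn T w u"
  using sym_rtrancl[OF sym_bip_adj] unfolding sym_def by blast

lemma conn_trans: "conn T u w \<Longrightarrow> conn T w z \<Longrightarrow> conn T u z"
  by (rule rtrancl_trans)

lemma conn_edge: "(v,e) \<in> T \<Longrightarrow> conn T (Inl v) (Inr e)"
  unfolding bip_adj_def by blast

lemma conn_edge': "(v,e) \<in> T \<Longrightarrow> conn T (Inr e) (Inl v)"
  unfolding bip_adj_def by blast

lemma bip_adj_insert:
  "bip_adj (insert (v,e) T) = insert (Inl v, Inr e) (insert (Inr e, Inl v) (bip_adj T))"
  unfolding bip_adj_def by blast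

lemma conn_insert:
  assumes "conn (insert (v,e) T) u w"
  shows "conn T u w \<or> (conn T u (Inl v) \<and> conn T (Inr e) w) \<or> (conn T u (Inr e) \<and> conn T (Inl v) w)"
  using assms
proof (induction rule: rtrancl_induct)
  case base thus ?case by simp
next
  case (step y z)
  from step.hyps(2) have "(y,z) \<in> bip_adj T \<or> (y = Inl v \<and> z = Inr e) \<or> (y = Inr e \<and> z = Inl v)"
    by (auto simp add: bip_adj_insert)
  thus ?case
  proof (elim disjE conjE)
    assume a: "(y,z) \<in> bip_adj T"
    show ?case using step.IH a by (meson rtrancl.rtrancl_into_rtrancl)
  next
    assume "y = Inl v" "z = Inr e"
    thus ?case using step.IH by blast
  next
    assume "y = Inr e" "z = Inl v"
    thus ?case using step.IH by blast
  qed
qed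

lemma cross:
  assumes "(u,w) \<in> r\<^sup>*" "P u" "\<not> P w"
  shows "\<exists>a b. (a,b) \<in> r \<and> P a \<and> \<not> P b"
  using assms
proof (induction rule: rtrancl_induct)
  case base thus ?case by simp
next
  case (step y z)
  show ?case
  proof (cases "P y")
    case True thus ?thesis using step by blast
  next
    case False thus ?thesis using step by blast
  qed
qed

lemma edge_nodes: "(v,e) \<in> bip_edges V E inc \<Longrightarrow> Inl v \<in> bip_nodes V E \<and> Inr e \<in> bip_nodes V E"
  unfolding bip_edges_def bip_nodes_def by blast

lemma st_min:
  assumes "spanning_tree V E inc T" "(v,e) \<in> T"
  shows "\<not> conn (T - {(v,e)}) (Inl v) (Inr e)"
proof
  assume c: "conn (T - {(v,e)}) (Inl v) (Inr e)"
  have "graph_connected (bip_nodes V E) (T - {(v,e)})"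
    unfolding graph_connected_def
  proof (intro ballI)
    fix u w assume "u \<in> bip_nodes V E" "w \<in> bip_nodes V E"
    hence "conn (insert (v,e) (T - {(v,e)})) u w"
      using assms unfolding spanning_tree_def graph_connected_def
      by (simp add: insert_absorb)
    from conn_insert[OF this] show "conn (T - {(v,e)}) u w"
      using c conn_sym[OF c] by (meson conn_trans)
  qed
  thus False using assms unfolding spanning_tree_def by blast
qed

lemma st_intro:
  assumes "T \<subseteq> bip_edges V E inc" "graph_connected (bip_nodes V E) T"
    "\<And>v e. (v,e) \<in> T \<Longrightarrow> \<not> conn (T - {(v,e)}) (Inl v) (Inr e)"
  shows "spanning_tree V E inc T"
  unfolding spanning_tree_def
proof (intro conjI ballI assms(1,2))
  fix t assume t: "t \<in> T"
  obtain v e where ve: "t = (v,e)" by (cases t)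
  show "\<not> graph_connected (bip_nodes V E) (T - {t})"
  proof
    assume "graph_connected (bip_nodes V E) (T - {t})"
    moreover have "Inl v \<in> bip_nodes V E" "Inr e \<in> bip_nodes V E"
      using edge_nodes[of v e V E inc] assms(1) t ve by auto
    ultimately have "conn (T - {(v,e)}) (Inl v) (Inr e)"
      unfolding graph_connected_def ve by blast
    thus False using assms(3) t ve by blast
  qed
qed

lemma exchange:
  assumes T: "spanning_tree V E inc T" and T': "spanning_tree V E inc T'"
    and p: "p \<in> T" "p \<notin> T'"
  shows "\<exists>q\<in>T'. q \<notin> T \<and> spanning_tree V E inc (insert q (T - {p}))"
proof -
  obtain v e where pve: "p = (v,e)" by (cases p)
  define T0 where "T0 = T - {p}"
  define N where "N = bip_nodes V E"
  have Tsub: "T \<subseteq> bip_edges V E inc" and Tc: "graph_connected N T"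
    using T unfolding spanning_tree_def N_def by auto
  have T'sub: "T' \<subseteq> bip_edges V E inc" and T'c: "graph_connected N T'"
    using T' unfolding spanning_tree_def N_def by auto
  have nc: "\<not> conn T0 (Inl v) (Inr e)" using st_min[OF T] p pve T0_def by blast
  have vebip: "(v,e) \<in> bip_edges V E inc" using Tsub p pve by blast
  have vN: "Inl v \<in> N" and eN: "Inr e \<in> N" using edge_nodes[OF vebip] N_def by auto
  have TT0: "T = insert (v,e) T0" using p pve T0_def by blast
  have cover: "conn T0 (Inl v) w \<or> conn T0 (Inr e) w" if "w \<in> N" for w
  proof -
    have "conn (insert (v,e) T0) (Inl v) w" using Tc vN that TT0 unfolding graph_connected_def by auto
    from conn_insert[OF this] show ?thesis using nc by blast
  qed
  have "conn T' (Inl v) (Inr e)" using T'c vN eN unfolding graph_connected_def by blast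
  from cross[OF this, of "\<lambda>w. conn T0 (Inl v) w"] nc
  obtain a0 b0 where ab0: "(a0,b0) \<in> bip_adj T'" "conn T0 (Inl v) a0" "\<not> conn T0 (Inl v) b0"
    by auto
  obtain a b where q: "(a,b) \<in> T'" and
    ab: "(a0 = Inl a \<and> b0 = Inr b) \<or> (a0 = Inr b \<and> b0 = Inl a)"
    using ab0(1) unfolding bip_adj_def by blast
  have qc: "conn T0 (Inl v) (Inl a) \<noteq> conn T0 (Inl v) (Inr b)"
    using ab ab0(2,3) by auto
  have nab: "\<not> conn T0 (Inl a) (Inr b)"
  proof
    assume h: "conn T0 (Inl a) (Inr b)"
    have "conn T0 (Inl v) (Inl a) \<longleftrightarrow> conn T0 (Inl v) (Inr b)"
    proof
      assume "conn T0 (Inl v) (Inl a)" thus "conn T0 (Inl v) (Inr b)" using h by (rule conn_trans)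
    next
      assume "conn T0 (Inl v) (Inr b)" thus "conn T0 (Inl v) (Inl a)" using conn_sym[OF h] by (rule conn_trans)
    qed
    thus False using qc by blast
  qed
  have qT: "(a,b) \<notin> T"
  proof
    assume "(a,b) \<in> T"
    moreover have "(a,b) \<noteq> p" using p(2) q by blast
    ultimately have "(a,b) \<in> T0" unfolding T0_def by blast
    thus False using nab conn_edge[of a b T0] by blast
  qed
  have abbip: "(a,b) \<in> bip_edges V E inc" using T'sub q by blast
  have abN: "Inl a \<in> N" "Inr b \<in> N" using edge_nodes[OF abbip] N_def by auto
  define T2 where "T2 = insert (a,b) T0"
  have T0T2: "T0 \<subseteq> T2" unfolding T2_def by blast
  have sub: "T2 \<subseteq> bip_edges V E inc" using Tsub T'sub q unfolding T2_def T0_def by blast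
  have ve2: "conn T2 (Inl v) (Inr e)"
  proof (cases "conn T0 (Inl v) (Inl a)")
    case True
    hence "\<not> conn T0 (Inl v) (Inr b)" using qc by blast
    hence "conn T0 (Inr e) (Inr b)" using cover abN by blast
    hence "conn T2 (Inr b) (Inr e)" using conn_sym conn_mono[OF T0T2] by metis
    moreover have "conn T2 (Inl v) (Inl a)" using True conn_mono[OF T0T2] by blast
    moreover have "conn T2 (Inl a) (Inr b)" using conn_edge[of a b T2] T2_def by blast
    ultimately show ?thesis by (meson conn_trans)
  next
    case False
    hence "conn T0 (Inl v) (Inr b)" using qc by blast
    have "conn T0 (Inr e) (Inl a)" using cover abN False by blast
    hence "conn T2 (Inl a) (Inr e)" using conn_sym conn_mono[OF T0T2] by metis
    moreover have "conn T2 (Inl v) (Inr b)" using \<open>conn T0 (Inl v) (Inr b)\<close> conn_mono[OF T0T2] by blast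
    moreover have "conn T2 (Inr b) (Inl a)" using conn_edge'[of a b T2] T2_def by blast
    ultimately show ?thesis by (meson conn_trans)
  qed
  have conn2: "graph_connected N T2"
    unfolding graph_connected_def
  proof (intro ballI)
    have all: "conn T2 (Inl v) w" if "w \<in> N" for w
    proof -
      have "conn T2 (Inl v) w" if h: "conn T0 (Inl v) w" using conn_mono[OF T0T2 h] .
      moreover have "conn T2 (Inl v) w" if h: "conn T0 (Inr e) w" using conn_trans[OF ve2 conn_mono[OF T0T2 h]] .
      ultimately show ?thesis using cover[OF that] by blast
    qed
    fix u w assume "u \<in> N" "w \<in> N"
    thus "conn T2 u w" using conn_trans[OF conn_sym[OF all] all] by blast
  qed
  have min2: "\<not> conn (T2 - {(c,d)}) (Inl c) (Inr d)" if cd: "(c,d) \<in> T2" for c d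
  proof (cases "(c,d) = (a,b)")
    case True
    have "T2 - {(a,b)} = T0" using qT unfolding T2_def T0_def by blast
    thus ?thesis using True nab by simp
  next
    case False
    hence cd0: "(c,d) \<in> T0" using cd T2_def by blast
    have eq: "T2 - {(c,d)} = insert (a,b) (T0 - {(c,d)})" using False T2_def by blast
    have sub0: "T0 - {(c,d)} \<subseteq> T0" by blast
    have sub1: "T0 - {(c,d)} \<subseteq> T - {(c,d)}" using T0_def by blast
    have cdT: "(c,d) \<in> T" using cd0 T0_def by blast
    have ncd: "\<not> conn (T - {(c,d)}) (Inl c) (Inr d)" using st_min[OF T cdT] .
    have ccd: "conn T0 (Inl c) (Inr d)" using conn_edge[OF cd0] .
    show ?thesis
    proof
      assume "conn (T2 - {(c,d)}) (Inl c) (Inr d)"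
      hence "conn (insert (a,b) (T0 - {(c,d)})) (Inl c) (Inr d)" using eq by simp
      from conn_insert[OF this] show False
      proof (elim disjE conjE)
        assume "conn (T0 - {(c, d)}) (Inl c) (Inr d)"
        thus False using ncd conn_mono[OF sub1] by blast
      next
        assume h: "conn (T0 - {(c, d)}) (Inl c) (Inl a)" "conn (T0 - {(c, d)}) (Inr b) (Inr d)"
        hence "conn T0 (Inl c) (Inl a)" "conn T0 (Inr b) (Inr d)" using conn_mono[OF sub0] by blast+
        hence h1: "conn T0 (Inl a) (Inl c)" "conn T0 (Inr b) (Inr d)" using conn_sym by blast+
        have "conn T0 (Inl a) (Inr b)" using conn_trans[OF conn_trans[OF h1(1) ccd] conn_sym[OF h1(2)]] .
        thus False using nab by blast
      next
        assume h: "conn (T0 - {(c, d)}) (Inl c) (Inr b)" "conn (T0 - {(c, d)}) (Inl a) (Inr d)"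
        hence "conn T0 (Inl c) (Inr b)" "conn T0 (Inl a) (Inr d)" using conn_mono[OF sub0] by blast+
        hence h1: "conn T0 (Inl c) (Inr b)" "conn T0 (Inl a) (Inr d)" by blast+
        have "conn T0 (Inl a) (Inr b)" using conn_trans[OF conn_trans[OF h1(2) conn_sym[OF ccd]] h1(1)] .
        thus False using nab by blast
      qed
    qed
  qed
  have "spanning_tree V E inc T2"
    using st_intro[OF sub conn2[unfolded N_def]] min2 by blast
  thus ?thesis using q qT unfolding T2_def T0_def by blast
qed



definition deg :: "('v \<times> 'e) set \<Rightarrow> 'e \<Rightarrow> nat" where
  "deg T e = card {v. (v,e) \<in> T}"

lemma deg_fin:
  assumes "finite V" "T \<subseteq> bip_edges V E inc"
  shows "finite {w. (w,e) \<in> T}"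
proof -
  have "{w. (w,e) \<in> T} \<subseteq> V" using assms(2) unfolding bip_edges_def by blast
  thus ?thesis using assms(1) finite_subset by blast
qed

lemma deg_exchange:
  assumes fin: "finite V" and sub: "T \<subseteq> bip_edges V E inc"
    and p: "(v,x) \<in> T" and q: "(a,y) \<notin> T"
  shows "int (deg (insert (a,y) (T - {(v,x)})) e) = int (deg T e) - ind x e + ind y e"
proof -
  define S where "S = {w. (w,e) \<in> T}"
  have fS: "finite S" using deg_fin[OF fin sub] S_def by simp
  have dT: "deg T e = card S" unfolding deg_def S_def ..
  show ?thesis
  proof (cases "e = x")
    case True
    hence vS: "v \<in> S" using p S_def by simp
    show ?thesis
    proof (cases "e = y")
      case True
      have eq: "{w. (w,e) \<in> insert (a,y) (T - {(v,x)})} = insert a (S - {v})"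
        using \<open>e = x\<close> True S_def by auto
      have "a \<notin> S - {v}" using q True S_def by auto
      moreover have "card S > 0" using fS vS card_gt_0_iff by blast
      ultimately have "card (insert a (S - {v})) = card S"
        using fS vS by (simp add: card_Diff_singleton)
      thus ?thesis using eq dT \<open>e = x\<close> True unfolding deg_def ind_def by simp
    next
      case False
      have eq: "{w. (w,e) \<in> insert (a,y) (T - {(v,x)})} = S - {v}"
        using \<open>e = x\<close> False S_def by auto
      have "card (S - {v}) = card S - 1" using fS vS by (simp add: card_Diff_singleton)
      moreover have "card S \<ge> 1" using fS vS by (metis One_nat_def Suc_leI card_gt_0_iff empty_iff)
      ultimately show ?thesis using eq dT \<open>e = x\<close> False unfolding deg_def ind_def by simp
    qed
  next
    case False
    show ?thesis
    proof (cases "e = y")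
      case True
      have eq: "{w. (w,e) \<in> insert (a,y) (T - {(v,x)})} = insert a S"
        using False True S_def by auto
      have "a \<notin> S" using q True S_def by auto
      hence "card (insert a S) = card S + 1" using fS by simp
      thus ?thesis using eq dT False True unfolding deg_def ind_def by simp
    next
      case False2: False
      have eq: "{w. (w,e) \<in> insert (a,y) (T - {(v,x)})} = S"
        using False False2 S_def by auto
      thus ?thesis using dT False False2 unfolding deg_def ind_def by simp
    qed
  qed
qed

lemma WE_T:
  assumes fin: "finite V" "finite E"
  shows "spanning_tree V E inc T \<Longrightarrow> spanning_tree V E inc T' \<Longrightarrow> x \<in> E \<Longrightarrow> deg T x > deg T' x \<Longrightarrow>
    \<exists>y\<in>E. deg T' y > deg T y \<and> (\<exists>T2. spanning_tree V E inc T2 \<and>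
       (\<forall>e\<in>E. int (deg T2 e) = int (deg T e) - ind x e + ind y e))"
proof (induction "card (T - T')" arbitrary: T x rule: less_induct)
  case less
  have Tsub: "T \<subseteq> bip_edges V E inc" using less.prems(1) unfolding spanning_tree_def by (rule conjunct1)
  have T'sub: "T' \<subseteq> bip_edges V E inc" using less.prems(2) unfolding spanning_tree_def by (rule conjunct1)
  have finT: "finite T"
  proof -
    have "bip_edges V E inc \<subseteq> V \<times> E" unfolding bip_edges_def by blast
    thus ?thesis using Tsub fin by (meson finite_SigmaI finite_subset subset_trans)
  qed
  have "\<not> {w. (w,x) \<in> T} \<subseteq> {w. (w,x) \<in> T'}"
  proof
    assume "{w. (w,x) \<in> T} \<subseteq> {w. (w,x) \<in> T'}"
    hence "deg T x \<le> deg T' x" unfolding deg_def using card_mono[OF deg_fin[OF fin(1) T'sub]] by blast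
    thus False using less.prems(4) by simp
  qed
  then obtain v where pT: "(v,x) \<in> T" and pT': "(v,x) \<notin> T'" by blast
  from exchange[OF less.prems(1,2) pT pT'] obtain q where
    qT': "q \<in> T'" and qT: "q \<notin> T" and st1: "spanning_tree V E inc (insert q (T - {(v,x)}))"
    by blast
  obtain a y where qay: "q = (a,y)" by (cases q)
  define T1 where "T1 = insert q (T - {(v,x)})"
  have yE: "y \<in> E" using qT' T'sub qay unfolding bip_edges_def by blast
  have dT1: "int (deg T1 e) = int (deg T e) - ind x e + ind y e" for e
    using deg_exchange[OF fin(1) Tsub pT, of a y e] qT qay T1_def by simp
  have lt: "card (T1 - T') < card (T - T')"
  proof -
    have "T1 - T' = (T - T') - {(v,x)}" using qT' T1_def by blast
    moreover have "(v,x) \<in> T - T'" using pT pT' by blast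
    moreover have "finite (T - T')" using finT by simp
    ultimately show ?thesis by (metis card_Diff1_less)
  qed
  have st1': "spanning_tree V E inc T1" using st1 T1_def by simp
  show ?case
  proof (cases "y = x")
    case True
    hence same: "deg T1 e = deg T e" for e using dT1[of e] by simp
    from less.hyps[OF lt st1' less.prems(2,3)] less.prems(4) same
    show ?thesis by simp
  next
    case yx: False
    show ?thesis
    proof (cases "deg T' y > deg T y")
      case True
      thus ?thesis using yE st1' dT1 by blast
    next
      case False
      have "deg T1 y > deg T' y" using dT1[of y] yx False unfolding ind_def by simp
      from less.hyps[OF lt st1' less.prems(2) yE this] obtain z T2 where
        zE: "z \<in> E" and z: "deg T' z > deg T1 z" and st2: "spanning_tree V E inc T2"
        and d2: "\<forall>e\<in>E. int (deg T2 e) = int (deg T1 e) - ind y e + ind z e" by blast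
      have zy: "z \<noteq> y" using z \<open>deg T1 y > deg T' y\<close> by auto
      have zx: "z \<noteq> x"
      proof
        assume "z = x"
        hence "int (deg T' x) > int (deg T x) - 1" using z dT1[of x] yx unfolding ind_def by simp
        thus False using less.prems(4) by simp
      qed
      have "deg T1 z = deg T z" using dT1[of z] zy zx unfolding ind_def by simp
      hence "deg T' z > deg T z" using z by simp
      moreover have "\<forall>e\<in>E. int (deg T2 e) = int (deg T e) - ind x e + ind z e"
        using d2 dT1 by simp
      ultimately show ?thesis using zE st2 by blast
    qed
  qed
qed

lemma WE:
  assumes fin: "finite V" "finite E"
    and F: "hypertree V E inc F" and F': "hypertree V E inc F'"
    and xE: "x \<in> E" and gt: "F x > F' x"
  shows "\<exists>y\<in>E. F' y > F y \<and> hypertree V E inc (\<lambda>e. F e - ind x e + ind y e)"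
proof -
  obtain T where T: "spanning_tree V E inc T" and dT: "\<forall>e\<in>E. int (deg T e) = F e + 1"
    using F unfolding hypertree_def deg_def by blast
  obtain T' where T': "spanning_tree V E inc T'" and dT': "\<forall>e\<in>E. int (deg T' e) = F' e + 1"
    using F' unfolding hypertree_def deg_def by blast
  have "deg T x > deg T' x" using dT dT' xE gt by force
  from WE_T[OF fin T T' xE this] obtain y T2 where yE: "y \<in> E" and y: "deg T' y > deg T y"
    and st2: "spanning_tree V E inc T2"
    and d2: "\<forall>e\<in>E. int (deg T2 e) = int (deg T e) - ind x e + ind y e" by blast
  have "F' y > F y" using y dT dT' yE by force
  moreover have "hypertree V E inc (\<lambda>e. F e - ind x e + ind y e)"
    unfolding hypertree_def using st2 d2 dT unfolding deg_def by force
  ultimately show ?thesis using yE by blast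
qed



definition gsum :: "(nat \<Rightarrow> 'e) \<Rightarrow> (nat \<Rightarrow> 'e) \<Rightarrow> nat set \<Rightarrow> 'e \<Rightarrow> int" where
  "gsum a x K e = (\<Sum>j\<in>K. ind (a j) e - ind (x j) e)"

lemma gs_rem: "finite K \<Longrightarrow> k \<in> K \<Longrightarrow>
   gsum a x K e = gsum a x (K - {k}) e + (ind (a k) e - ind (x k) e)"
  unfolding gsum_def by (simp add: sum.remove)

lemma gs_x:
  assumes K: "K \<subseteq> {1..m}" and k: "k \<in> {1..m}"
    and injx: "\<And>i j. i \<in> {1..m} \<Longrightarrow> j \<in> {1..m} \<Longrightarrow> x i = x j \<Longrightarrow> i = j"
    and disj: "\<And>i j. i \<in> {1..m} \<Longrightarrow> j \<in> {1..m} \<Longrightarrow> a i \<noteq> x j"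
  shows "gsum a x K (x k) = (if k \<in> K then -1 else 0)"
proof -
  have fK: "finite K" using K finite_subset by blast
  have "gsum a x K (x k) = (\<Sum>j\<in>K. if j = k then -1 else 0)"
    unfolding gsum_def
  proof (rule sum.cong)
    fix j assume j: "j \<in> K"
    hence jm: "j \<in> {1..m}" using K by blast
    have "ind (a j) (x k) = 0" using disj[OF jm k] unfolding ind_def by auto
    moreover have "ind (x j) (x k) = (if j = k then 1 else 0)"
      using injx[OF jm k] unfolding ind_def by auto
    ultimately show "ind (a j) (x k) - ind (x j) (x k) = (if j = k then -1 else 0)" by simp
  qed simp
  also have "\<dots> = (if k \<in> K then -1 else 0)" using fK by (simp add: sum.delta')
  finally show ?thesis .
qed

theorem lemma4p5:
  fixes V :: "'v set" and E :: "'e set" and inc :: "'e \<Rightarrow> 'v set"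
    and a x :: "nat \<Rightarrow> 'e" and m :: nat and f :: "'e \<Rightarrow> int"
  assumes "hypergraph V E inc"
    and "hyp_connected V E inc"
    and "a ` {1..m} \<subseteq> E" and "x ` {1..m} \<subseteq> E"
    and "a ` {1..m} \<inter> x ` {1..m} = {}"
    and "hypertree V E inc f"
    and "\<forall>j\<in>{1..m}. can_transfer V E inc f (x j) (a j)"
    and "\<forall>j\<in>{1..m}. \<forall>i\<in>{1..m}. i < j \<longrightarrow> \<not> can_transfer V E inc f (x j) (a i)"
  shows "\<forall>J \<subseteq> {1..m}. hypertree V E inc
           (\<lambda>e. f e + (\<Sum>j\<in>J. ind (a j) e - ind (x j) e))"
proof -
  note hyps = assms
  have fin: "finite V" "finite E" using assms(1) unfolding hypergraph_def by auto
  have disj: "a i \<noteq> x j" if "i \<in> {1..m}" "j \<in> {1..m}" for i j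
    using assms(5) that by blast
  have injx: "i = j" if i: "i \<in> {1..m}" and j: "j \<in> {1..m}" and eq: "x i = x j" for i j
  proof (rule ccontr)
    assume "i \<noteq> j"
    hence "i < j \<or> j < i" by arith
    thus False
    proof
      assume "i < j"
      have "can_transfer V E inc f (x i) (a i)" using assms(7) i by blast
      hence "can_transfer V E inc f (x j) (a i)" using eq by simp
      thus False using assms(8) i j \<open>i < j\<close> by blast
    next
      assume "j < i"
      have "can_transfer V E inc f (x j) (a j)" using assms(7) j by blast
      hence "can_transfer V E inc f (x i) (a j)" using eq by simp
      thus False using assms(8) i j \<open>j < i\<close> by blast
    qed
  qed
  define G where "G K = (\<lambda>e. f e + gsum a x K e)" for K
  have main: "\<forall>J. J \<subseteq> {1..m} \<longrightarrow> card J = n \<longrightarrow> hypertree V E inc (G J)" for n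
  proof (induction n rule: less_induct)
    case (less n)
    show ?case
    proof (intro allI impI)
      fix J assume Jm: "J \<subseteq> {1..m}" and cJ: "card J = n"
      have fJ: "finite J" using Jm finite_subset by blast
      consider "n = 0" | "n = 1" | "n \<ge> 2" by arith
      thus "hypertree V E inc (G J)"
      proof cases
        case 1
        hence "J = {}" using cJ fJ by simp
        hence "G J = f" unfolding G_def gsum_def by simp
        thus ?thesis using assms(6) by simp
      next
        case 2
        then obtain k where Jk: "J = {k}" using cJ card_1_singletonE by blast
        hence km: "k \<in> {1..m}" using Jm by blast
        have "G J = (\<lambda>e. f e - ind (x k) e + ind (a k) e)"
          unfolding G_def gsum_def Jk by (simp add: algebra_simps)
        thus ?thesis using assms(7) km unfolding can_transfer_def by simp
      next
        case 3
        have Jne: "J \<noteq> {}" using 3 cJ by auto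
        define k1 where "k1 = Min J"
        define k2 where "k2 = Max J"
        have k1J: "k1 \<in> J" and k2J: "k2 \<in> J" using fJ Jne k1_def k2_def by auto
        have k1m: "k1 \<in> {1..m}" and k2m: "k2 \<in> {1..m}" using k1J k2J Jm by blast+
        have leMax: "j \<le> k2" if "j \<in> J" for j using fJ that k2_def by simp
        have geMin: "k1 \<le> j" if "j \<in> J" for j using fJ that k1_def by simp
        have k12: "k1 < k2"
        proof (rule ccontr)
          assume "\<not> k1 < k2"
          hence "J \<subseteq> {k1}" using leMax geMin by force
          hence "card J \<le> 1" using card_mono[of "{k1}" J] by simp
          thus False using 3 cJ by simp
        qed
        define J1 where "J1 = J - {k1}"
        define J2 where "J2 = J - {k2}"
        have J1m: "J1 \<subseteq> {1..m}" and J2m: "J2 \<subseteq> {1..m}" using Jm J1_def J2_def by auto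
        have cJ1: "card J1 < n" and cJ2: "card J2 < n"
          using cJ fJ k1J k2J J1_def J2_def 3 by auto
        have hJ1: "hypertree V E inc (G J1)" using less.IH[OF cJ1] J1m by blast
        have hJ2: "hypertree V E inc (G J2)" using less.IH[OF cJ2] J2m by blast
        have k2J1: "k2 \<in> J1" and k2J2: "k2 \<notin> J2" and k1J2: "k1 \<in> J2"
          using k12 k1J k2J J1_def J2_def by auto
        have xk2E: "x k2 \<in> E" using assms(4) k2m by blast
        have g2: "G J2 (x k2) = f (x k2)"
          using gs_x[OF J2m k2m injx disj] k2J2 unfolding G_def by simp
        have g1: "G J1 (x k2) = f (x k2) - 1"
          using gs_x[OF J1m k2m injx disj] k2J1 unfolding G_def by simp
        have "G J2 (x k2) > G J1 (x k2)" using g1 g2 by simp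
        from WE[OF fin hJ2 hJ1 xk2E this] obtain y where yE: "y \<in> E"
          and ygt: "G J1 y > G J2 y"
          and hy: "hypertree V E inc (\<lambda>e. G J2 e - ind (x k2) e + ind y e)" by blast
        have r1: "gsum a x J y = gsum a x J1 y + (ind (a k1) y - ind (x k1) y)"
          using gs_rem[OF fJ k1J] J1_def by simp
        have r2: "gsum a x J e = gsum a x J2 e + (ind (a k2) e - ind (x k2) e)" for e
          using gs_rem[OF fJ k2J] J2_def by simp
        have "G J1 y - G J2 y = (ind (a k2) y - ind (x k2) y) - (ind (a k1) y - ind (x k1) y)"
          using r1 r2[of y] unfolding G_def by simp
        hence yc: "y = a k2 \<or> y = x k1"
          using ygt unfolding ind_def by (auto split: if_splits)
        thus "hypertree V E inc (G J)"
        proof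
          assume "y = a k2"
          have "(\<lambda>e. G J2 e - ind (x k2) e + ind y e) = G J"
            unfolding G_def using r2 \<open>y = a k2\<close> by (auto simp: algebra_simps)
          thus ?thesis using hy by simp
        next
          assume yx: "y = x k1"
          define L where "L = (\<lambda>e. G J2 e - ind (x k2) e + ind (x k1) e)"
          have hL: "hypertree V E inc L" using hy yx L_def by simp
          have "x k1 \<noteq> x k2" using injx[OF k1m k2m] k12 by auto
          hence "L (x k2) = f (x k2) - 1" using g2 unfolding L_def ind_def by simp
          hence "f (x k2) > L (x k2)" by simp
          from WE[OF fin assms(6) hL xk2E this] obtain y' where y'E: "y' \<in> E"
            and y'gt: "L y' > f y'"
            and hy': "hypertree V E inc (\<lambda>e. f e - ind (x k2) e + ind y' e)" by blast
          have "\<exists>i\<in>J2. y' = a i"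
          proof (rule ccontr)
            assume na: "\<not> (\<exists>i\<in>J2. y' = a i)"
            have fJ2: "finite J2" using fJ J2_def by simp
            have r3: "gsum a x J2 y' = gsum a x (J2 - {k1}) y' + (ind (a k1) y' - ind (x k1) y')"
              using gs_rem[OF fJ2 k1J2] .
            have "ind (a k1) y' = 0" using na k1J2 unfolding ind_def by auto
            moreover have "gsum a x (J2 - {k1}) y' \<le> 0"
              unfolding gsum_def
            proof (rule sum_nonpos)
              fix j assume "j \<in> J2 - {k1}"
              hence "ind (a j) y' = 0" using na unfolding ind_def by auto
              thus "ind (a j) y' - ind (x j) y' \<le> 0" unfolding ind_def by simp
            qed
            moreover have "ind (x k2) y' \<ge> 0" unfolding ind_def by simp
            ultimately have "L y' \<le> f y'" unfolding L_def G_def using r3 by simp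
            thus False using y'gt by simp
          qed
          then obtain i where iJ2: "i \<in> J2" and y'i: "y' = a i" by blast
          have ik2: "i < k2" using iJ2 leMax J2_def by force
          have im: "i \<in> {1..m}" using iJ2 J2m by blast
          have "can_transfer V E inc f (x k2) (a i)"
            unfolding can_transfer_def using hy' y'i by simp
          thus ?thesis using assms(8) im k2m ik2 by blast
        qed
      qed
    qed
  qed
  show ?thesis
  proof (intro allI impI)
    fix J assume "J \<subseteq> {1..m}"
    hence "hypertree V E inc (G J)" using main by blast
    thus "hypertree V E inc (\<lambda>e. f e + (\<Sum>j\<in>J. ind (a j) e - ind (x j) e))"
      unfolding G_def gsum_def by simp
  qed
qed

end
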